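(* (a) Let $M\subset\mathcal P(\Omega_1)$, $N\subset\mathcal P(\Omega_2)$ be submanifolds and $\varphi:M\to N$, $\psi:N\to M$ Markov maps with $\psi\circ\varphi=\mathrm{id}_M$. Let $p\in M$, $q\in N$ with $q=\varphi(p)$ and $p=\psi(q)$. Then $\psi^*_q:T_p^*(M)\to T^*_q(N)$ is an isometry for the Fisher co-metrics: $g_{M,p}(\alpha_p,\beta_p)=g_{N,q}(\psi^*_q\alpha_p,\psi^*_q\beta_p)$ for all $\alpha_p,\beta_p\in T^*_p(M)$. (b) For every Markov co-embedding $\Psi:\mathcal P(\Omega_2)\to\mathcal P(\Omega_1)$, every $q\in\mathcal P(\Omega_2)$ (not only $q$ in the image of a given embedding) and all $\alpha,\beta\in T^*_{\Psi(q)}(\mathcal P(\Omega_1))$: $g_{\Psi(q)}(\alpha,\beta)=g_q(\Psi^*_q\alpha,\Psi_q^*\beta)$.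
   Context: For a finite set $\Omega$, $\mathcal P(\Omega)$ is the manifold of strictly positive probability distributions. A Markov map $\mathcal P(\Omega_1)\to\mathcal P(\Omega_2)$ is a map $p\mapsto\sum_xW(\cdot|x)p(x)$ for a surjective channel $W$ (equivalently an affine map between these sets); a Markov map between submanifolds $M\to N$ is the restriction of such a map. A Markov map $\Phi:\mathcal P(\Omega_1)\to\mathcal P(\Omega_2)$ is a Markov embedding if some Markov map $\Psi:\mathcal P(\Omega_2)\to\mathcal P(\Omega_1)$ satisfies $\Psi\circ\Phi=\mathrm{id}$; such $\Psi$ is called a Markov co-embedding. $\psi^*_q$ denotes the transpose of $(d\psi)_q:T_q(N)\to T_p(M)$. The Fisher metric is $g_p(X,Y)=\sum_\omega X^{(m)}(\omega)Y^{(m)}(\omega)/p(\omega)$ (m-representations); $g_M,g_N$ are its restrictions to $M,N$, and the same symbols denote the dual inner products (Fisher co-metrics) on cotangent spaces. On $\mathcal P(\Omega)$ the Fisher co-metric satisfies $g_p((d\langle A\rangle)_p,(d\langle B\rangle)_p)=\mathrm{Cov}_p(A,B)$. *)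

theory Defs
  imports "HOL-Analysis.Analysis"
begin

text \<open>A finite sample space Omega is a finite type; distributions and tangent
vectors (m-representation) are vectors in real^Omega.\<close>

definition PD :: "(real^'n) set" where
  "PD = {p. (\<forall>i. 0 < p $ i) \<and> (\<Sum>i\<in>UNIV. p $ i) = 1}"

text \<open>Surjective channel W(y|x) = W \$ y \$ x from Omega_1 ('n) to Omega_2 ('m):
stochastic columns, and every output has positive probability for some input.\<close>
definition surj_channel :: "real^'n^'m \<Rightarrow> bool" where
  "surj_channel W \<longleftrightarrow> (\<forall>y x. 0 \<le> W $ y $ x) \<and> (\<forall>x. (\<Sum>y\<in>UNIV. W $ y $ x) = 1)
     \<and> (\<forall>y. \<exists>x. 0 < W $ y $ x)"

text \<open>The Markov map of W is p |-> W *v p; being linear, its differential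
(in m-representation) is X |-> W *v X.\<close>
definition markov_map :: "real^'n^'m \<Rightarrow> real^'n \<Rightarrow> real^'m" where
  "markov_map W p = W *v p"

definition markov_co_embedding :: "real^'m^'n \<Rightarrow> bool" where
  "markov_co_embedding V \<longleftrightarrow> surj_channel V \<and>
     (\<exists>W :: real^'n^'m. surj_channel W \<and> (\<forall>p\<in>PD. markov_map V (markov_map W p) = p))"

definition C1_on :: "(real^'n \<Rightarrow> real^'n) \<Rightarrow> (real^'n) set \<Rightarrow> bool" where
  "C1_on h U \<longleftrightarrow> (\<exists>h'. (\<forall>x\<in>U. (h has_derivative blinfun_apply (h' x)) (at x)) \<and> continuous_on U h')"

definition submanifold :: "(real^'n) set \<Rightarrow> bool" where
  "submanifold M \<longleftrightarrow> M \<subseteq> PD \<and>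
    (\<forall>p\<in>M. \<exists>U V h k S. open U \<and> p \<in> U \<and> open V \<and> homeomorphism U V h k \<and>
        C1_on h U \<and> C1_on k V \<and> subspace S \<and> h ` (M \<inter> U) = S \<inter> V)"

definition tangent_space :: "(real^'n) set \<Rightarrow> real^'n \<Rightarrow> (real^'n) set" where
  "tangent_space M p = {v. \<exists>\<gamma>. \<gamma> 0 = p \<and> (\<exists>e>0. \<forall>t. \<bar>t\<bar> < e \<longrightarrow> \<gamma> t \<in> M)
       \<and> (\<gamma> has_vector_derivative v) (at 0)}"

definition cotangent_space :: "(real^'n) set \<Rightarrow> real^'n \<Rightarrow> (real^'n \<Rightarrow> real) set" where
  "cotangent_space M p = {\<alpha>. \<forall>X\<in>tangent_space M p. \<forall>Y\<in>tangent_space M p. \<forall>a b.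
       \<alpha> (a *\<^sub>R X + b *\<^sub>R Y) = a * \<alpha> X + b * \<alpha> Y}"

definition fisher :: "real^'n \<Rightarrow> real^'n \<Rightarrow> real^'n \<Rightarrow> real" where
  "fisher p X Y = (\<Sum>w\<in>UNIV. X $ w * Y $ w / p $ w)"

definition sharp :: "(real^'n) set \<Rightarrow> real^'n \<Rightarrow> (real^'n \<Rightarrow> real) \<Rightarrow> real^'n" where
  "sharp M p \<alpha> = (THE X. X \<in> tangent_space M p \<and> (\<forall>Y\<in>tangent_space M p. fisher p X Y = \<alpha> Y))"

definition cometric :: "(real^'n) set \<Rightarrow> real^'n \<Rightarrow> (real^'n \<Rightarrow> real) \<Rightarrow> (real^'n \<Rightarrow> real) \<Rightarrow> real" where
  "cometric M p \<alpha> \<beta> = fisher p (sharp M p \<alpha>) (sharp M p \<beta>)"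

text \<open>Transpose of the differential of the Markov map of V: alpha |-> alpha o (V *v _).\<close>
definition pullback :: "real^'m^'n \<Rightarrow> (real^'n \<Rightarrow> real) \<Rightarrow> (real^'m \<Rightarrow> real)" where
  "pullback V \<alpha> = (\<lambda>Y. \<alpha> (V *v Y))"

end

theory Submission
  imports Defs
begin


lemma fisher_sym: "fisher p X Y = fisher p Y X"
  unfolding fisher_def by (simp add: mult.commute)

lemma fisher_add_left: "fisher p (X + Z) Y = fisher p X Y + fisher p Z Y"
  unfolding fisher_def by (simp add: sum.distrib[symmetric] algebra_simps add_divide_distrib)

lemma fisher_add_right: "fisher p Y (X + Z) = fisher p Y X + fisher p Y Z"
  using fisher_add_left fisher_sym by metis

lemma fisher_scale_left: "fisher p (c *\<^sub>R X) Y = c * fisher p X Y"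
  unfolding fisher_def by (simp add: sum_distrib_left algebra_simps)

lemma fisher_scale_right: "fisher p Y (c *\<^sub>R X) = c * fisher p Y X"
  using fisher_scale_left fisher_sym by metis

lemma fisher_diff_left: "fisher p (X - Z) Y = fisher p X Y - fisher p Z Y"
  using fisher_add_left[of p "X - Z" Z Y] by simp

lemma fisher_diff_right: "fisher p Y (X - Z) = fisher p Y X - fisher p Y Z"
  using fisher_diff_left fisher_sym by metis

lemma fisher_nonneg: assumes "\<forall>i. 0 < p $ i" shows "0 \<le> fisher p X X"
  unfolding fisher_def using assms by (intro sum_nonneg) (simp add: less_imp_le)

lemma fisher_zero: assumes "\<forall>i. 0 < p $ i" "fisher p X X = 0" shows "X = 0"
proof -
  have "\<forall>i\<in>UNIV. X $ i * X $ i / p $ i = 0"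
    using assms unfolding fisher_def
    by (subst sum_nonneg_eq_0_iff[symmetric]) (auto simp: less_imp_le)
  then show ?thesis using assms(1) by (auto simp: vec_eq_iff) (metis less_irrefl)
qed

lemma cs_weighted:
  fixes w X p :: "'a \<Rightarrow> real"
  assumes "finite A" "\<forall>x\<in>A. 0 \<le> w x" "\<forall>x\<in>A. 0 < p x"
  shows "(\<Sum>x\<in>A. w x * X x)^2 \<le> (\<Sum>x\<in>A. w x * X x ^ 2 / p x) * (\<Sum>x\<in>A. w x * p x)"
proof -
  define a where "a = (\<Sum>x\<in>A. w x * X x ^ 2 / p x)"
  define b where "b = (\<Sum>x\<in>A. w x * p x)"
  define c where "c = (\<Sum>x\<in>A. w x * X x)"
  show ?thesis
  proof (cases "b = 0")
    case True
    have "\<forall>x\<in>A. w x * p x = 0"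
      using True assms unfolding b_def
      by (subst sum_nonneg_eq_0_iff[symmetric]) (auto)
    then have "\<forall>x\<in>A. w x = 0" using assms(3) by (metis less_irrefl mult_eq_0_iff)
    then have "c = 0" unfolding c_def by simp
    then show ?thesis unfolding a_def[symmetric] b_def[symmetric] c_def[symmetric] using True by simp
  next
    case False
    have "b \<ge> 0" using assms unfolding b_def by (intro sum_nonneg) (simp add: less_imp_le)
    then have bpos: "b > 0" using False by simp
    define l where "l = c / b"
    have "0 \<le> (\<Sum>x\<in>A. w x * (X x - l * p x)^2 / p x)"
      using assms by (intro sum_nonneg) auto
    also have "\<dots> = (\<Sum>x\<in>A. w x * X x ^ 2 / p x - 2 * l * (w x * X x) + l^2 * (w x * p x))"
    proof (intro sum.cong refl)
      fix x assume "x \<in> A"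
      then have px: "p x \<noteq> 0" using assms(3) by auto
      have "w x * (X x - l * p x)^2 = w x * X x ^ 2 - 2 * l * (w x * X x) * p x + l^2 * (w x * p x) * p x"
        by (simp add: power2_eq_square algebra_simps)
      then show "w x * (X x - l * p x)^2 / p x = w x * X x ^ 2 / p x - 2 * l * (w x * X x) + l^2 * (w x * p x)"
        using px by (simp add: diff_divide_distrib add_divide_distrib)
    qed
    also have "\<dots> = a - 2 * l * c + l^2 * b"
      unfolding a_def b_def c_def
      by (simp add: sum.distrib sum_subtractf sum_distrib_left)
    also have "\<dots> = a - c^2 / b" using bpos unfolding l_def by (simp add: power2_eq_square)
    finally have "c^2 / b \<le> a" by simp
    then have "c^2 \<le> a * b" using bpos by (simp add: divide_le_eq)
    then show ?thesis unfolding a_def b_def c_def .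
  qed
qed

lemma fisher_mono:
  fixes W :: "real^'n^'m"
  assumes "\<forall>y x. 0 \<le> W $ y $ x" "\<forall>x. (\<Sum>y\<in>UNIV. W $ y $ x) = 1" "\<forall>x. 0 < p $ x"
  shows "fisher (W *v p) (W *v X) (W *v X) \<le> fisher p X X"
proof -
  have "fisher (W *v p) (W *v X) (W *v X) \<le> (\<Sum>y\<in>UNIV. \<Sum>x\<in>UNIV. W $ y $ x * X $ x ^ 2 / p $ x)"
    unfolding fisher_def
  proof (intro sum_mono)
    fix y
    have nn: "0 \<le> (\<Sum>x\<in>UNIV. W $ y $ x * X $ x ^ 2 / p $ x)"
      using assms by (intro sum_nonneg) (simp add: less_imp_le)
    have cs: "(W *v X) $ y ^ 2 \<le> (\<Sum>x\<in>UNIV. W $ y $ x * X $ x ^ 2 / p $ x) * (W *v p) $ y"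
      unfolding matrix_vector_mult_def using cs_weighted[of UNIV "\<lambda>x. W $ y $ x" "\<lambda>x. p $ x" "\<lambda>x. X $ x"] assms
      by auto
    have wp: "0 \<le> (W *v p) $ y" unfolding matrix_vector_mult_def using assms
      by (auto intro!: sum_nonneg simp: less_imp_le)
    show "(W *v X) $ y * (W *v X) $ y / (W *v p) $ y \<le> (\<Sum>x\<in>UNIV. W $ y $ x * X $ x ^ 2 / p $ x)"
    proof (cases "(W *v p) $ y = 0")
      case True then show ?thesis using nn by simp
    next
      case False then have "(W *v p) $ y > 0" using wp by simp
      then show ?thesis using cs by (simp only: divide_le_eq power2_eq_square[symmetric] if_True)
    qed
  qed
  also have "\<dots> = (\<Sum>x\<in>UNIV. X $ x ^ 2 / p $ x * (\<Sum>y\<in>UNIV. W $ y $ x))"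
    apply (subst sum.swap)
    apply (intro sum.cong refl)
    apply (subst sum_distrib_left)
    apply (intro sum.cong refl)
    by (metis times_divide_eq_right mult.commute)
  also have "\<dots> = fisher p X X" using assms(2) unfolding fisher_def by (simp add: power2_eq_square)
  finally show ?thesis .
qed



definition linT :: "(real^'n) set \<Rightarrow> (real^'n \<Rightarrow> real) \<Rightarrow> bool" where
  "linT T \<alpha> \<longleftrightarrow> (\<forall>X\<in>T. \<forall>Y\<in>T. \<forall>a b. \<alpha> (a *\<^sub>R X + b *\<^sub>R Y) = a * \<alpha> X + b * \<alpha> Y)"

definition sharp' :: "(real^'n) set \<Rightarrow> real^'n \<Rightarrow> (real^'n \<Rightarrow> real) \<Rightarrow> real^'n" where
  "sharp' T p \<alpha> = (THE X. X \<in> T \<and> (\<forall>Y\<in>T. fisher p X Y = \<alpha> Y))"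

lemma sharp_eq: "sharp M p \<alpha> = sharp' (tangent_space M p) p \<alpha>"
  unfolding sharp_def sharp'_def ..

lemma cotangent_eq: "cotangent_space M p = {\<alpha>. linT (tangent_space M p) \<alpha>}"
  unfolding cotangent_space_def linT_def ..

lemma linT_sum:
  assumes "subspace T" "linT T \<alpha>" "finite F" "\<forall>i\<in>F. f i \<in> T"
  shows "\<alpha> (\<Sum>i\<in>F. c i *\<^sub>R f i) = (\<Sum>i\<in>F. c i * \<alpha> (f i))"
  using assms(3,4)
proof (induction F rule: finite_induct)
  case empty
  have "\<alpha> (0 *\<^sub>R 0 + 0 *\<^sub>R 0) = 0 * \<alpha> 0 + 0 * \<alpha> 0"
    using assms(1,2) unfolding linT_def by (meson subspace_0)
  then show ?case by simp
next
  case (insert x F)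
  have S: "(\<Sum>i\<in>F. c i *\<^sub>R f i) \<in> T"
    using insert assms(1) by (intro subspace_sum) (auto intro: subspace_scale)
  have "\<alpha> (c x *\<^sub>R f x + 1 *\<^sub>R (\<Sum>i\<in>F. c i *\<^sub>R f i)) = c x * \<alpha> (f x) + 1 * \<alpha> (\<Sum>i\<in>F. c i *\<^sub>R f i)"
    using assms(2) S insert.prems unfolding linT_def by blast
  then show ?case using insert by simp
qed

lemma sharp_unique:
  assumes "subspace T" "\<forall>i. 0 < p $ i" "X \<in> T" "\<forall>Y\<in>T. fisher p X Y = \<alpha> Y"
  shows "sharp' T p \<alpha> = X"
  unfolding sharp'_def
proof (rule the_equality)
  show "X \<in> T \<and> (\<forall>Y\<in>T. fisher p X Y = \<alpha> Y)" using assms by blast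
  fix X' assume X': "X' \<in> T \<and> (\<forall>Y\<in>T. fisher p X' Y = \<alpha> Y)"
  have Z: "X' - X \<in> T" using assms X' by (simp add: subspace_diff)
  have "fisher p (X' - X) (X' - X) = 0"
    using Z X' assms by (simp add: fisher_diff_left)
  then have "X' - X = 0" using fisher_zero assms(2) by blast
  then show "X' = X" by simp
qed

lemma riesz:
  fixes T :: "(real^'n) set"
  assumes T: "subspace T" and p: "\<forall>i. 0 < p $ i" and a: "linT T \<alpha>"
  shows "\<exists>X\<in>T. \<forall>Y\<in>T. fisher p X Y = \<alpha> Y"
proof -
  define D where "D = (\<lambda>X::real^'n. \<chi> i. X $ i / sqrt (p $ i))"
  define Di where "Di = (\<lambda>X::real^'n. \<chi> i. X $ i * sqrt (p $ i))"
  have linD: "linear D" unfolding D_def by (auto simp: linear_iff vec_eq_iff add_divide_distrib)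
  have linDi: "linear Di" unfolding Di_def by (auto simp: linear_iff vec_eq_iff algebra_simps)
  have DiD: "Di (D X) = X" for X unfolding D_def Di_def using p
    by (simp add: vec_eq_iff) (metis less_irrefl real_sqrt_eq_zero_cancel_iff)
  have fD: "fisher p X Y = D X \<bullet> D Y" for X Y
    unfolding fisher_def D_def inner_vec_def
  proof (intro sum.cong refl)
    fix i
    have "sqrt (p $ i) * sqrt (p $ i) = p $ i" using p by (simp add: less_imp_le)
    then show "X $ i * Y $ i / p $ i = (\<chi> i. X $ i / sqrt (p $ i)) $ i \<bullet> (\<chi> i. Y $ i / sqrt (p $ i)) $ i"
      by (metis inner_real_def times_divide_times_eq vec_lambda_beta)
  qed
  define T' where "T' = D ` T"
  have T': "subspace T'" unfolding T'_def using linD T by (rule linear_subspace_image)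
  obtain B where B: "B \<subseteq> T'" "pairwise orthogonal B" "\<And>x. x \<in> B \<Longrightarrow> norm x = 1"
    "independent B" "span B = T'"
    using orthonormal_basis_subspace[OF T'] by metis
  have fB: "finite B" using B(4) by (rule finiteI_independent)
  have DiB: "Di b \<in> T" if "b \<in> B" for b
    using that B(1) DiD unfolding T'_def by auto
  define X' where "X' = (\<Sum>b\<in>B. \<alpha> (Di b) *\<^sub>R b)"
  have X'T': "X' \<in> T'" unfolding X'_def using B(5)[symmetric]
    by (simp add: span_sum span_mul span_base)
  then obtain x0 where x0: "x0 \<in> T" "X' = D x0" unfolding T'_def by auto
  show ?thesis
  proof (rule bexI[of _ x0])
    show "x0 \<in> T" by fact
    show "\<forall>Y\<in>T. fisher p x0 Y = \<alpha> Y"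
    proof
      fix Y assume Y: "Y \<in> T"
      have DY: "D Y \<in> span B" using Y B(5) unfolding T'_def by auto
      have exp: "(\<Sum>b\<in>B. (D Y \<bullet> b) *\<^sub>R b) = D Y"
        using orthonormal_basis_expand[OF B(2) B(3) DY fB] .
      have "\<alpha> Y = \<alpha> (Di (D Y))" using DiD by simp
      also have "\<dots> = \<alpha> (\<Sum>b\<in>B. (D Y \<bullet> b) *\<^sub>R Di b)"
        by (subst exp[symmetric]) (simp add: linear_sum[OF linDi] linear_scale[OF linDi])
      also have "\<dots> = (\<Sum>b\<in>B. (D Y \<bullet> b) * \<alpha> (Di b))"
        using linT_sum[OF T a fB, of Di] DiB by blast
      also have "\<dots> = X' \<bullet> D Y" unfolding X'_def
        by (simp add: inner_sum_left inner_sum_right inner_commute[of _ "D Y"] mult.commute)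
      also have "\<dots> = fisher p x0 Y" using x0 fD by simp
      finally show "fisher p x0 Y = \<alpha> Y" by simp
    qed
  qed
qed

lemma sharp_works:
  assumes "subspace T" "\<forall>i. 0 < p $ i" "linT T \<alpha>"
  shows "sharp' T p \<alpha> \<in> T \<and> (\<forall>Y\<in>T. fisher p (sharp' T p \<alpha>) Y = \<alpha> Y)"
  using riesz[OF assms] sharp_unique[OF assms(1,2)] by metis



lemma quad_nonneg_zero:
  fixes c d :: real
  assumes "d \<ge> 0" "\<forall>t. 0 \<le> 2 * t * c + t^2 * d"
  shows "c = 0"
proof (rule ccontr)
  assume c: "c \<noteq> 0"
  define t where "t = - c / (d + 1)"
  have d1: "d + 1 > 0" using assms(1) by simp
  have ht: "(d + 1) * t = - c" unfolding t_def using d1 by simp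
  have "(d + 1)^2 * (2 * t * c + t^2 * d) = 2 * c * (d + 1) * ((d + 1) * t) + ((d + 1) * t)^2 * d"
    by (simp add: power2_eq_square algebra_simps)
  also have "\<dots> = c^2 * (- d - 2)" unfolding ht by (simp add: power2_eq_square algebra_simps)
  finally have e: "(d + 1)^2 * (2 * t * c + t^2 * d) = c^2 * (- d - 2)" .
  have "c^2 * (- d - 2) < 0" using c assms(1) by (intro mult_pos_neg) auto
  moreover have "0 \<le> (d + 1)^2 * (2 * t * c + t^2 * d)" using assms by simp
  ultimately show False using e by simp
qed

lemma transfer:
  fixes T1 :: "(real^'n) set" and T2 :: "(real^'m) set" and A :: "real^'m^'n" and B :: "real^'n^'m"
  assumes T1: "subspace T1" and T2: "subspace T2"
    and p: "\<forall>i. 0 < p $ i" and q: "\<forall>i. 0 < q $ i"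
    and AT: "\<forall>Y\<in>T2. A *v Y \<in> T1" and BT: "\<forall>X\<in>T1. B *v X \<in> T2"
    and AB: "\<forall>X\<in>T1. A *v (B *v X) = X"
    and mA: "\<forall>Y\<in>T2. fisher p (A *v Y) (A *v Y) \<le> fisher q Y Y"
    and mB: "\<forall>X\<in>T1. fisher q (B *v X) (B *v X) \<le> fisher p X X"
    and a: "linT T1 \<alpha>" and b: "linT T1 \<beta>"
  shows "fisher p (sharp' T1 p \<alpha>) (sharp' T1 p \<beta>) =
         fisher q (sharp' T2 q (\<lambda>Y. \<alpha> (A *v Y))) (sharp' T2 q (\<lambda>Y. \<beta> (A *v Y)))"
proof -
  have iso: "fisher q (B *v X) (B *v X) = fisher p X X" if "X \<in> T1" for X
  proof -
    have "fisher p X X = fisher p (A *v (B *v X)) (A *v (B *v X))" using AB that by simp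
    also have "\<dots> \<le> fisher q (B *v X) (B *v X)" using mA BT that by blast
    moreover have "fisher q (B *v X) (B *v X) \<le> fisher p X X" using mB that by blast
    ultimately show ?thesis by linarith
  qed
  have polar: "fisher q (B *v X) (B *v X') = fisher p X X'" if "X \<in> T1" "X' \<in> T1" for X X'
  proof -
    have "X + X' \<in> T1" using that T1 by (simp add: subspace_add)
    from iso[OF this] have "fisher q (B *v X + B *v X') (B *v X + B *v X') = fisher p (X + X') (X + X')"
      by (simp add: matrix_vector_right_distrib)
    moreover have "fisher q (B *v X') (B *v X) = fisher q (B *v X) (B *v X')" by (rule fisher_sym)
    moreover have "fisher p X' X = fisher p X X'" by (rule fisher_sym)
    ultimately show ?thesis using iso[OF that(1)] iso[OF that(2)]
      by (simp add: fisher_add_left fisher_add_right)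
  qed
  have orth: "fisher q (B *v X) Y = fisher p X (A *v Y)" if X: "X \<in> T1" and Y: "Y \<in> T2" for X Y
  proof -
    define u where "u = B *v X"
    define w where "w = Y - B *v (A *v Y)"
    have AY: "A *v Y \<in> T1" using AT Y by blast
    have w: "w \<in> T2" unfolding w_def using T2 Y BT AY by (simp add: subspace_diff)
    have Aw: "A *v w = 0" unfolding w_def using AB AY by (simp add: matrix_vector_mult_diff_distrib)
    have u: "u \<in> T2" unfolding u_def using BT X by blast
    have "\<forall>t. 0 \<le> 2 * t * fisher q u w + t^2 * fisher q w w"
    proof
      fix t
      have "u + t *\<^sub>R w \<in> T2" using u w T2 by (simp add: subspace_add subspace_scale)
      then have "fisher p (A *v (u + t *\<^sub>R w)) (A *v (u + t *\<^sub>R w)) \<le> fisher q (u + t *\<^sub>R w) (u + t *\<^sub>R w)"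
        using mA by blast
      moreover have "A *v (u + t *\<^sub>R w) = X" unfolding u_def
        using Aw AB X by (simp add: matrix_vector_right_distrib matrix_vector_mult_scaleR)
      moreover have "fisher q (u + t *\<^sub>R w) (u + t *\<^sub>R w) = fisher q u u + 2 * t * fisher q u w + t^2 * fisher q w w"
        using fisher_sym[of q w u] by (simp add: fisher_add_left fisher_add_right fisher_scale_left fisher_scale_right
            power2_eq_square algebra_simps)
      moreover have "fisher q u u = fisher p X X" unfolding u_def using iso X by blast
      ultimately show "0 \<le> 2 * t * fisher q u w + t^2 * fisher q w w" by simp
    qed
    then have "fisher q u w = 0" using quad_nonneg_zero fisher_nonneg[OF q] by blast
    moreover have "Y = B *v (A *v Y) + w" unfolding w_def by simp
    ultimately have "fisher q u Y = fisher q u (B *v (A *v Y))"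
      by (metis add.right_neutral fisher_add_right)
    also have "\<dots> = fisher p X (A *v Y)" unfolding u_def using polar X AY by blast
    finally show ?thesis unfolding u_def .
  qed
  have key: "sharp' T2 q (\<lambda>Y. \<gamma> (A *v Y)) = B *v sharp' T1 p \<gamma>" if g: "linT T1 \<gamma>" for \<gamma>
  proof (rule sharp_unique[OF T2 q])
    have s: "sharp' T1 p \<gamma> \<in> T1 \<and> (\<forall>Y\<in>T1. fisher p (sharp' T1 p \<gamma>) Y = \<gamma> Y)"
      using sharp_works[OF T1 p g] .
    then show "B *v sharp' T1 p \<gamma> \<in> T2" using BT by blast
    show "\<forall>Y\<in>T2. fisher q (B *v sharp' T1 p \<gamma>) Y = \<gamma> (A *v Y)"
      using s orth AT by simp
  qed
  have sa: "sharp' T1 p \<alpha> \<in> T1" using sharp_works[OF T1 p a] by blast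
  have sb: "sharp' T1 p \<beta> \<in> T1" using sharp_works[OF T1 p b] by blast
  show ?thesis using key[OF a] key[OF b] polar[OF sa sb] by simp
qed



lemma deriv_local:
  assumes "(f has_vector_derivative d) (at 0)" "e > 0" "\<forall>t. \<bar>t\<bar> < e \<longrightarrow> f t = g t"
  shows "(g has_vector_derivative d) (at (0::real))"
  using assms(1) open_ball[of 0 e]
proof (rule has_vector_derivative_transform_within_open)
  show "0 \<in> ball (0::real) e" using assms(2) by simp
  fix y :: real assume "y \<in> ball 0 e" then show "f y = g y" using assms(3) by (simp add: dist_real_def)
qed

lemma bl_mat: "bounded_linear (\<lambda>x. (A::real^'n^'m) *v x)"
  using matrix_vector_mul_linear linear_conv_bounded_linear by blast

lemma ts_map:
  fixes W :: "real^'n^'m"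
  assumes "v \<in> tangent_space M p" "(\<lambda>x. W *v x) ` M \<subseteq> N"
  shows "W *v v \<in> tangent_space N (W *v p)"
proof -
  obtain \<gamma> e where g: "\<gamma> 0 = p" "e > 0" "\<forall>t. \<bar>t\<bar> < e \<longrightarrow> \<gamma> t \<in> M" "(\<gamma> has_vector_derivative v) (at 0)"
    using assms(1) unfolding tangent_space_def by blast
  have "((\<lambda>t. W *v \<gamma> t) has_vector_derivative W *v v) (at 0)"
    using bounded_linear.has_vector_derivative[OF bl_mat g(4)] .
  moreover have "\<forall>t. \<bar>t\<bar> < e \<longrightarrow> W *v \<gamma> t \<in> N" using g(3) assms(2) by blast
  ultimately have "(\<lambda>t. W *v \<gamma> t) 0 = W *v p \<and> (\<exists>e>0. \<forall>t. \<bar>t\<bar> < e \<longrightarrow> (\<lambda>t. W *v \<gamma> t) t \<in> N)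
     \<and> ((\<lambda>t. W *v \<gamma> t) has_vector_derivative W *v v) (at 0)" using g(1,2) by blast
  then show ?thesis unfolding tangent_space_def by (intro CollectI exI[of _ "\<lambda>t. W *v \<gamma> t"])
qed

lemma ts_id:
  fixes W :: "real^'n^'m" and V :: "real^'m^'n"
  assumes "v \<in> tangent_space M p" "\<forall>x\<in>M. V *v (W *v x) = x"
  shows "V *v (W *v v) = v"
proof -
  obtain \<gamma> e where g: "\<gamma> 0 = p" "e > 0" "\<forall>t. \<bar>t\<bar> < e \<longrightarrow> \<gamma> t \<in> M" "(\<gamma> has_vector_derivative v) (at 0)"
    using assms(1) unfolding tangent_space_def by blast
  have dd: "((\<lambda>t. V *v (W *v \<gamma> t)) has_vector_derivative V *v (W *v v)) (at 0)"
    using bounded_linear.has_vector_derivative[OF bl_mat bounded_linear.has_vector_derivative[OF bl_mat g(4)]] .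
  have ee: "\<forall>t. \<bar>t\<bar> < e \<longrightarrow> V *v (W *v \<gamma> t) = \<gamma> t" using g(3) assms(2) by blast
  have "(\<gamma> has_vector_derivative V *v (W *v v)) (at 0)"
    by (rule deriv_local[OF dd g(2) ee])
  then show ?thesis using g(4) by (rule vector_derivative_unique_at)
qed

lemma bl_sum: "bounded_linear (\<lambda>x::real^'n. \<Sum>i\<in>UNIV. x $ i)"
proof -
  have "linear (\<lambda>x::real^'n. \<Sum>i\<in>UNIV. x $ i)"
    by (auto simp: linear_iff sum.distrib sum_distrib_left)
  then show ?thesis using linear_conv_bounded_linear by blast
qed

lemma ts_PD:
  fixes p :: "real^'n"
  assumes "p \<in> PD"
  shows "tangent_space PD p = {v. (\<Sum>i\<in>UNIV. v $ i) = 0}"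
proof (intro set_eqI iffI)
  fix v assume "v \<in> tangent_space PD p"
  then obtain \<gamma> e where g: "\<gamma> 0 = p" "e > 0" "\<forall>t. \<bar>t\<bar> < e \<longrightarrow> \<gamma> t \<in> PD" "(\<gamma> has_vector_derivative v) (at 0)"
    unfolding tangent_space_def by blast
  have d1: "((\<lambda>t. \<Sum>i\<in>UNIV. \<gamma> t $ i) has_vector_derivative (\<Sum>i\<in>UNIV. v $ i)) (at 0)"
    using bounded_linear.has_vector_derivative[OF bl_sum g(4)] .
  have c1: "\<forall>t. \<bar>t\<bar> < e \<longrightarrow> (\<Sum>i\<in>UNIV. \<gamma> t $ i) = 1"
    using g(3) unfolding PD_def by blast
  have "((\<lambda>t. 1::real) has_vector_derivative (\<Sum>i\<in>UNIV. v $ i)) (at 0)"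
    by (rule deriv_local[OF d1 g(2) c1])
  moreover have "((\<lambda>t. 1::real) has_vector_derivative 0) (at 0)" by (rule has_vector_derivative_const)
  ultimately have "(\<Sum>i\<in>UNIV. v $ i) = 0" by (rule vector_derivative_unique_at)
  then show "v \<in> {v. (\<Sum>i\<in>UNIV. v $ i) = 0}" by simp
next
  fix v :: "real^'n" assume v: "v \<in> {v. (\<Sum>i\<in>UNIV. v $ i) = 0}"
  define e where "e = Min (range (\<lambda>i. p $ i / (\<bar>v $ i\<bar> + 1)))"
  have pp: "\<forall>i. 0 < p $ i" "(\<Sum>i\<in>UNIV. p $ i) = 1" using assms unfolding PD_def by auto
  have epos: "e > 0" unfolding e_def using pp
    by (subst Min_gr_iff) (auto intro!: divide_pos_pos simp: add_nonneg_pos)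
  have ele: "e \<le> p $ i / (\<bar>v $ i\<bar> + 1)" for i unfolding e_def by (rule Min_le) auto
  have inPD: "p + t *\<^sub>R v \<in> PD" if t: "\<bar>t\<bar> < e" for t
  proof -
    have "0 < p $ i + t * v $ i" for i
    proof -
      have a1: "\<bar>v $ i\<bar> + 1 > 0" by (simp add: add_nonneg_pos)
      have "\<bar>t\<bar> * \<bar>v $ i\<bar> \<le> \<bar>t\<bar> * (\<bar>v $ i\<bar> + 1)" by (simp add: mult_left_mono)
      also have "\<dots> < e * (\<bar>v $ i\<bar> + 1)" using t a1 by (simp add: mult_strict_right_mono)
      also have "\<dots> \<le> p $ i" using ele[of i] a1 by (simp add: le_divide_eq)
      finally have "\<bar>t * v $ i\<bar> < p $ i" by (simp add: abs_mult)
      then show ?thesis by linarith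
    qed
    moreover have "(\<Sum>i\<in>UNIV. p $ i + t * v $ i) = 1"
      using v pp by (simp add: sum.distrib sum_distrib_left[symmetric])
    ultimately show ?thesis unfolding PD_def by simp
  qed
  have "((\<lambda>t. p + t *\<^sub>R v) has_vector_derivative v) (at 0)"
    by (auto intro!: derivative_eq_intros)
  then show "v \<in> tangent_space PD p" unfolding tangent_space_def using epos inPD
    by (intro CollectI exI[of _ "\<lambda>t. p + t *\<^sub>R v"] conjI exI[of _ e]) auto
qed



lemma dq:
  fixes f :: "real \<Rightarrow> 'a::real_normed_vector"
  assumes "(f has_vector_derivative d) (at 0)"
  shows "((\<lambda>y. (f y - f 0) /\<^sub>R y) \<longlongrightarrow> d) (at 0)"
proof -
  from assms have "((\<lambda>y. ((f y - f 0) - (y - 0) *\<^sub>R d) /\<^sub>R norm (y - 0)) \<longlongrightarrow> 0) (at 0)"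
    unfolding has_vector_derivative_def has_derivative_at_within by blast
  then have "((\<lambda>y. norm (((f y - f 0) - y *\<^sub>R d) /\<^sub>R norm y)) \<longlongrightarrow> 0) (at 0)"
    using tendsto_norm_zero by force
  moreover have EV: "eventually (\<lambda>y. norm (((f y - f 0) - y *\<^sub>R d) /\<^sub>R norm y) = norm ((f y - f 0) /\<^sub>R y - d)) (at 0)"
    unfolding eventually_at_filter
  proof (intro always_eventually allI impI)
    fix y :: real assume "y \<noteq> 0"
    then have "(f y - f 0) /\<^sub>R y - d = ((f y - f 0) - y *\<^sub>R d) /\<^sub>R y"
      by (simp add: scaleR_diff_right)
    then show "norm (((f y - f 0) - y *\<^sub>R d) /\<^sub>R norm y) = norm ((f y - f 0) /\<^sub>R y - d)"
      by simp
  qed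
  ultimately have "((\<lambda>y. norm ((f y - f 0) /\<^sub>R y - d)) \<longlongrightarrow> 0) (at 0)"
    by (rule Lim_transform_eventually)
  then show ?thesis
    by (simp add: tendsto_norm_zero_iff LIM_zero_iff)
qed

lemma ts_sub:
  fixes M :: "(real^'n) set"
  assumes sm: "submanifold M" and pM: "p \<in> M"
  shows "subspace (tangent_space M p)"
proof -
  obtain U V h k S where ch: "open U" "p \<in> U" "open V" "homeomorphism U V h k"
      "C1_on h U" "C1_on k V" "subspace S" "h ` (M \<inter> U) = S \<inter> V"
    using sm pM unfolding submanifold_def by metis
  obtain h' where hd: "\<forall>x\<in>U. (h has_derivative blinfun_apply (h' x)) (at x)"
    using ch(5) unfolding C1_on_def by blast
  obtain k' where kd: "\<forall>x\<in>V. (k has_derivative blinfun_apply (k' x)) (at x)"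
    using ch(6) unfolding C1_on_def by blast
  have kh: "\<forall>x\<in>U. k (h x) = x" and hU: "h ` U = V" and hk: "\<forall>y\<in>V. h (k y) = y"
    using ch(4) unfolding homeomorphism_def by auto
  define hp where "hp = h p"
  have hpV: "hp \<in> V" unfolding hp_def using hU ch(2) by blast
  have hpS: "hp \<in> S" unfolding hp_def using ch(8) pM ch(2) by blast
  define Dh where "Dh = blinfun_apply (h' p)"
  define Dk where "Dk = blinfun_apply (k' hp)"
  have hD: "(h has_derivative Dh) (at p)" unfolding Dh_def using hd ch(2) by blast
  have kD: "(k has_derivative Dk) (at hp)" unfolding Dk_def using kd hpV by blast
  have linDk: "linear Dk" unfolding Dk_def by (rule bounded_linear.linear[OF blinfun.bounded_linear_right])
  have DkDh: "Dk (Dh v) = v" for v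
  proof -
    have c1: "((\<lambda>x. k (h x)) has_derivative (\<lambda>x. Dk (Dh x))) (at p)"
      using has_derivative_compose[OF hD] kD unfolding hp_def by blast
    have "((\<lambda>x. x) has_derivative (\<lambda>x. Dk (Dh x))) (at p)"
      using c1 ch(1,2) by (rule has_derivative_transform_within_open) (use kh in auto)
    then have "(\<lambda>x. Dk (Dh x)) = (\<lambda>x. x)"
      using has_derivative_ident has_derivative_unique by blast
    then show ?thesis by (metis)
  qed
  have "tangent_space M p = Dk ` S"
  proof (intro set_eqI iffI)
    fix v assume "v \<in> tangent_space M p"
    then obtain \<gamma> e where g: "\<gamma> 0 = p" "e > 0" "\<forall>t. \<bar>t\<bar> < e \<longrightarrow> \<gamma> t \<in> M"
        "(\<gamma> has_vector_derivative v) (at 0)"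
      unfolding tangent_space_def by blast
    have gd: "(\<gamma> has_derivative (\<lambda>t. t *\<^sub>R v)) (at 0)" using g(4) unfolding has_vector_derivative_def .
    have "((\<lambda>t. h (\<gamma> t)) has_derivative (\<lambda>t. Dh (t *\<^sub>R v))) (at 0)"
      using has_derivative_compose[OF gd] hD g(1) by simp
    then have dvec: "((\<lambda>t. h (\<gamma> t)) has_vector_derivative Dh v) (at 0)"
      unfolding has_vector_derivative_def Dh_def by (simp add: blinfun.scaleR_right)
    have cont: "(\<gamma> \<longlongrightarrow> p) (at 0)"
      using has_vector_derivative_continuous[OF g(4)] g(1) by (simp add: continuous_within)
    have evU: "eventually (\<lambda>t. \<gamma> t \<in> U) (at 0)"
      using topological_tendstoD[OF cont ch(1) ch(2)] .
    have eve: "eventually (\<lambda>t. \<bar>t\<bar> < e) (at (0::real))"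
      unfolding eventually_at using g(2) by (intro exI[of _ e]) (auto simp: dist_real_def)
    have evS: "eventually (\<lambda>t. (h (\<gamma> t) - h (\<gamma> 0)) /\<^sub>R t \<in> S) (at 0)"
      using evU eve
    proof eventually_elim
      case (elim t)
      then have "\<gamma> t \<in> M \<inter> U" using g(3) by blast
      then have "h (\<gamma> t) \<in> S" using ch(8) by blast
      moreover have "h (\<gamma> 0) \<in> S" using hpS g(1) unfolding hp_def by simp
      ultimately show ?case using ch(7) by (simp add: subspace_diff subspace_scale)
    qed
    have "Dh v \<in> S"
      using Lim_in_closed_set[OF closed_subspace[OF ch(7)] evS at_neq_bot dq[OF dvec]] .
    moreover have "v = Dk (Dh v)" using DkDh by simp
    ultimately show "v \<in> Dk ` S" by blast
  next
    fix u assume "u \<in> Dk ` S"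
    then obtain w where w: "w \<in> S" "u = Dk w" by blast
    obtain \<epsilon> where eps: "\<epsilon> > 0" "ball hp \<epsilon> \<subseteq> V" using ch(3) hpV open_contains_ball by blast
    define e where "e = \<epsilon> / (norm w + 1)"
    have epos: "e > 0" unfolding e_def using eps(1) by (simp add: add_nonneg_pos)
    have inM: "k (hp + t *\<^sub>R w) \<in> M" if t: "\<bar>t\<bar> < e" for t
    proof -
      have n1: "norm w + 1 > 0" by (simp add: add_nonneg_pos)
      have "\<bar>t\<bar> * norm w \<le> \<bar>t\<bar> * (norm w + 1)" by (simp add: mult_left_mono)
      also have "\<dots> < e * (norm w + 1)" using t n1 by (simp add: mult_strict_right_mono)
      also have "\<dots> = \<epsilon>" unfolding e_def using n1 by simp
      finally have "dist hp (hp + t *\<^sub>R w) < \<epsilon>" by (simp add: dist_norm)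
      then have "hp + t *\<^sub>R w \<in> V" using eps(2) by auto
      moreover have "hp + t *\<^sub>R w \<in> S" using hpS w(1) ch(7) by (simp add: subspace_add subspace_scale)
      ultimately have "hp + t *\<^sub>R w \<in> h ` (M \<inter> U)" using ch(8) by blast
      then obtain m where m: "m \<in> M \<inter> U" "hp + t *\<^sub>R w = h m" by blast
      then show ?thesis using kh by simp
    qed
    have ld: "((\<lambda>t. hp + t *\<^sub>R w) has_derivative (\<lambda>t. t *\<^sub>R w)) (at 0)"
      using has_vector_derivative_def[of "\<lambda>t. hp + t *\<^sub>R w" w "at 0"]
      by (auto intro!: derivative_eq_intros)
    have kD': "(k has_derivative Dk) (at ((\<lambda>t. hp + t *\<^sub>R w) 0))" using kD by simp
    have "((\<lambda>t. k (hp + t *\<^sub>R w)) has_derivative (\<lambda>t. Dk (t *\<^sub>R w))) (at 0)"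
      using has_derivative_compose[OF ld kD'] by simp
    then have dd: "((\<lambda>t. k (hp + t *\<^sub>R w)) has_vector_derivative u) (at 0)"
      unfolding has_vector_derivative_def w(2) using linear_scale[OF linDk] by simp
    have k0: "k (hp + 0 *\<^sub>R w) = p" using kh ch(2) unfolding hp_def by simp
    show "u \<in> tangent_space M p" unfolding tangent_space_def
      using k0 epos inM dd by (intro CollectI exI[of _ "\<lambda>t. k (hp + t *\<^sub>R w)"] conjI exI[of _ e]) auto
  qed
  then show ?thesis using linear_subspace_image[OF linDk ch(7)] by simp
qed



lemma partA:
  fixes M :: "(real^'n) set" and N :: "(real^'m) set" and W :: "real^'n^'m" and V :: "real^'m^'n"
  assumes "submanifold M" "submanifold N" "surj_channel W" "surj_channel V"
    "markov_map W ` M \<subseteq> N" "markov_map V ` N \<subseteq> M"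
    "\<forall>x\<in>M. markov_map V (markov_map W x) = x"
    "p \<in> M" "q \<in> N" "q = markov_map W p" "p = markov_map V q"
    "\<alpha> \<in> cotangent_space M p" "\<beta> \<in> cotangent_space M p"
  shows "cometric M p \<alpha> \<beta> = cometric N q (pullback V \<alpha>) (pullback V \<beta>)"
proof -
  have mm: "markov_map A = (\<lambda>x. A *v x)" for A :: "real^'a^'b" by (rule ext) (simp add: markov_map_def)
  note as = assms[unfolded mm]
  define T1 where "T1 = tangent_space M p"
  define T2 where "T2 = tangent_space N q"
  have T1: "subspace T1" unfolding T1_def using ts_sub assms(1,8) by blast
  have T2: "subspace T2" unfolding T2_def using ts_sub assms(2,9) by blast
  have pPD: "p \<in> PD" using assms(1,8) unfolding submanifold_def by blast
  have qPD: "q \<in> PD" using assms(2,9) unfolding submanifold_def by blast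
  have pp: "\<forall>i. 0 < p $ i" using pPD unfolding PD_def by blast
  have qp: "\<forall>i. 0 < q $ i" using qPD unfolding PD_def by blast
  have AT: "\<forall>Y\<in>T2. V *v Y \<in> T1" unfolding T1_def T2_def
    using ts_map[of _ N q V M] as(6,11) by metis
  have BT: "\<forall>X\<in>T1. W *v X \<in> T2" unfolding T1_def T2_def
    using ts_map[of _ M p W N] as(5,10) by metis
  have AB: "\<forall>X\<in>T1. V *v (W *v X) = X" unfolding T1_def
    using ts_id[of _ M p V W] as(7) by blast
  have mA: "\<forall>Y\<in>T2. fisher p (V *v Y) (V *v Y) \<le> fisher q Y Y"
    using fisher_mono[of V q] assms(4) qp as(11) unfolding surj_channel_def by metis
  have mB: "\<forall>X\<in>T1. fisher q (W *v X) (W *v X) \<le> fisher p X X"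
    using fisher_mono[of W p] assms(3) pp as(10) unfolding surj_channel_def by metis
  have a: "linT T1 \<alpha>" and b: "linT T1 \<beta>" using assms(12,13) unfolding T1_def cotangent_eq by auto
  have "fisher p (sharp' T1 p \<alpha>) (sharp' T1 p \<beta>) =
         fisher q (sharp' T2 q (\<lambda>Y. \<alpha> (V *v Y))) (sharp' T2 q (\<lambda>Y. \<beta> (V *v Y)))"
    by (rule transfer[OF T1 T2 pp qp AT BT AB mA mB a b])
  then show ?thesis unfolding cometric_def sharp_eq pullback_def T1_def T2_def .
qed



lemma colsum:
  fixes W :: "real^'n^'m"
  assumes "\<forall>x. (\<Sum>y\<in>UNIV. W $ y $ x) = 1"
  shows "(\<Sum>y\<in>UNIV. (W *v X) $ y) = (\<Sum>x\<in>UNIV. X $ x)"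
proof -
  have "(\<Sum>y\<in>UNIV. (W *v X) $ y) = (\<Sum>y\<in>UNIV. \<Sum>x\<in>UNIV. W $ y $ x * X $ x)"
    by (simp add: matrix_vector_mult_def)
  also have "\<dots> = (\<Sum>x\<in>UNIV. (\<Sum>y\<in>UNIV. W $ y $ x) * X $ x)"
    by (subst sum.swap) (simp add: sum_distrib_right)
  finally show ?thesis using assms by simp
qed

lemma K1:
  fixes W :: "real^'n^'m" and V :: "real^'m^'n"
  assumes "\<forall>p\<in>PD. V *v (W *v p) = p"
  shows "(\<Sum>j\<in>UNIV. V $ i' $ j * W $ j $ i) = (if i' = i then 1 else 0)"
proof -
  define u :: "real^'n" where "u = (\<chi> k. 1 / real CARD('n))"
  define e :: "real^'n" where "e = (\<chi> k. if k = i then 1 else 0)"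
  define p2 where "p2 = (1/2) *\<^sub>R (u + e)"
  have c: "real CARD('n) > 0" by simp
  have uPD: "u \<in> PD" unfolding PD_def u_def using c by simp
  have se: "(\<Sum>k\<in>UNIV. e $ k) = 1" unfolding e_def by simp
  have p2PD: "p2 \<in> PD" unfolding PD_def
  proof (intro CollectI conjI allI)
    fix k have "0 < 1 / real CARD('n)" using c by simp
    then show "0 < p2 $ k" unfolding p2_def u_def e_def by (simp add: add_pos_nonneg)
  next
    have "(\<Sum>k\<in>UNIV. p2 $ k) = (1/2) * ((\<Sum>k\<in>UNIV. u $ k) + (\<Sum>k\<in>UNIV. e $ k))"
      unfolding p2_def by (simp add: sum.distrib sum_divide_distrib[symmetric])
    then show "(\<Sum>k\<in>UNIV. p2 $ k) = 1" using uPD se unfolding PD_def by simp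
  qed
  have eq: "e = 2 *\<^sub>R p2 - u" unfolding p2_def by (simp add: scaleR_add_right)
  have "V *v (W *v e) = 2 *\<^sub>R (V *v (W *v p2)) - V *v (W *v u)"
    unfolding eq by (simp add: matrix_vector_mult_diff_distrib matrix_vector_mult_scaleR)
  also have "\<dots> = e" using assms uPD p2PD eq by simp
  finally have Ve: "V *v (W *v e) = e" .
  have "(V *v (W *v e)) $ i' = (\<Sum>j\<in>UNIV. V $ i' $ j * W $ j $ i)"
    unfolding e_def by (simp add: matrix_vector_mult_def if_distrib[of "\<lambda>x. _ * x"] cong: if_cong)
  then show ?thesis using Ve unfolding e_def by simp
qed



lemma partB:
  fixes V :: "real^'m^'n" and q :: "real^'m"
  assumes co: "markov_co_embedding V" and qPD: "q \<in> PD"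
    and a0: "\<alpha> \<in> cotangent_space PD (markov_map V q)" and b0: "\<beta> \<in> cotangent_space PD (markov_map V q)"
  shows "cometric PD (markov_map V q) \<alpha> \<beta> = cometric PD q (pullback V \<alpha>) (pullback V \<beta>)"
proof -
  obtain W :: "real^'n^'m" where Wc: "surj_channel W" and VW: "\<forall>p\<in>PD. V *v (W *v p) = p"
    using co unfolding markov_co_embedding_def markov_map_def by blast
  have Vc: "surj_channel V" using co unfolding markov_co_embedding_def by blast
  have Vnn: "\<forall>i j. 0 \<le> V $ i $ j" and Vcs: "\<forall>j. (\<Sum>i\<in>UNIV. V $ i $ j) = 1"
    and Vs: "\<forall>i. \<exists>j. 0 < V $ i $ j" using Vc unfolding surj_channel_def by auto
  have Wnn: "\<forall>j i. 0 \<le> W $ j $ i" and Ws: "\<forall>j. \<exists>i. 0 < W $ j $ i"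
    using Wc unfolding surj_channel_def by auto
  have qp: "\<forall>j. 0 < q $ j" and qs: "(\<Sum>j\<in>UNIV. q $ j) = 1" using qPD unfolding PD_def by auto
  have K0: "V $ i' $ j * W $ j $ i = 0" if "i' \<noteq> i" for i' i j
  proof -
    have "(\<Sum>j\<in>UNIV. V $ i' $ j * W $ j $ i) = 0" using K1[OF VW, of i' i] that by simp
    then have "\<forall>j\<in>UNIV. V $ i' $ j * W $ j $ i = 0"
      using Vnn Wnn by (subst sum_nonneg_eq_0_iff[symmetric]) auto
    then show ?thesis by blast
  qed
  have K: "V $ i1 $ j * V $ i2 $ j = 0" if "i1 \<noteq> i2" for i1 i2 j
  proof -
    obtain i where wi: "0 < W $ j $ i" using Ws by blast
    show ?thesis
    proof (cases "i1 = i")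
      case True
      then have "i2 \<noteq> i" using that by blast
      then have "V $ i2 $ j = 0" using K0[of i2 i j] wi by simp
      then show ?thesis by simp
    next
      case False
      then have "V $ i1 $ j = 0" using K0[of i1 i j] wi by simp
      then show ?thesis by simp
    qed
  qed
  have VV: "V $ i $ j * V $ i' $ j = (if i = i' then V $ i $ j else 0)" for i i' j
  proof (cases "i = i'")
    case True
    have "V $ i $ j = V $ i $ j * (\<Sum>k\<in>UNIV. V $ k $ j)" using Vcs by simp
    also have "\<dots> = (\<Sum>k\<in>UNIV. V $ i $ j * V $ k $ j)" by (simp add: sum_distrib_left)
    also have "\<dots> = (\<Sum>k\<in>UNIV. if k = i then V $ i $ j * V $ i $ j else 0)"
      by (intro sum.cong refl) (use K in auto)
    also have "\<dots> = V $ i $ j * V $ i $ j" by simp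
    finally show ?thesis using True by simp
  next
    case False then show ?thesis using K by simp
  qed
  define r where "r = V *v q"
  have rdef: "r $ i = (\<Sum>j\<in>UNIV. V $ i $ j * q $ j)" for i unfolding r_def by (simp add: matrix_vector_mult_def)
  have rp: "\<forall>i. 0 < r $ i"
  proof
    fix i obtain j where "0 < V $ i $ j" using Vs by blast
    then have "0 < (\<Sum>j\<in>UNIV. V $ i $ j * q $ j)"
      using Vnn qp by (intro sum_pos2[of UNIV j]) (auto simp: less_imp_le)
    then show "0 < r $ i" using rdef by simp
  qed
  have rnz: "r $ i \<noteq> 0" for i using rp by (metis less_irrefl)
  have rPD: "r \<in> PD" unfolding PD_def using rp colsum[OF Vcs, of q] qs unfolding r_def by simp
  define Bm :: "real^'n^'m" where "Bm = (\<chi> j i. q $ j * V $ i $ j / r $ i)"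
  have Bnn: "\<forall>j i. 0 \<le> Bm $ j $ i" unfolding Bm_def using qp Vnn rp by (auto simp: less_imp_le)
  have Bcs: "\<forall>i. (\<Sum>j\<in>UNIV. Bm $ j $ i) = 1"
  proof
    fix i
    have "(\<Sum>j\<in>UNIV. Bm $ j $ i) = (\<Sum>j\<in>UNIV. V $ i $ j * q $ j) / r $ i"
      unfolding Bm_def by (simp add: sum_divide_distrib mult.commute)
    then show "(\<Sum>j\<in>UNIV. Bm $ j $ i) = 1" using rdef[of i] rnz[of i] by simp
  qed
  have Br: "Bm *v r = q"
  proof -
    have "(Bm *v r) $ j = q $ j" for j
    proof -
      have "(Bm *v r) $ j = (\<Sum>i\<in>UNIV. q $ j * V $ i $ j / r $ i * r $ i)"
        unfolding Bm_def by (simp add: matrix_vector_mult_def)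
      also have "\<dots> = (\<Sum>i\<in>UNIV. q $ j * V $ i $ j)"
        using rnz by (intro sum.cong refl) simp
      also have "\<dots> = q $ j" using Vcs by (simp add: sum_distrib_left[symmetric])
      finally show ?thesis .
    qed
    then show ?thesis by (simp add: vec_eq_iff)
  qed
  have VB: "V *v (Bm *v X) = X" for X
  proof -
    have "(V *v (Bm *v X)) $ i' = X $ i'" for i'
    proof -
      have "(V *v (Bm *v X)) $ i' = (\<Sum>j\<in>UNIV. \<Sum>i\<in>UNIV. V $ i' $ j * V $ i $ j * q $ j * (X $ i / r $ i))"
        unfolding Bm_def by (simp add: matrix_vector_mult_def sum_distrib_left mult.assoc mult.left_commute)
      also have "\<dots> = (\<Sum>i\<in>UNIV. (\<Sum>j\<in>UNIV. V $ i' $ j * V $ i $ j * q $ j) * (X $ i / r $ i))"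
        by (subst sum.swap) (simp add: sum_distrib_right sum_divide_distrib)
      also have "\<dots> = (\<Sum>i\<in>UNIV. (if i' = i then r $ i else 0) * (X $ i / r $ i))"
        by (intro sum.cong refl) (simp add: VV rdef)
      also have "\<dots> = (\<Sum>i\<in>UNIV. if i' = i then r $ i * (X $ i / r $ i) else 0)"
        by (intro sum.cong refl) simp
      also have "\<dots> = r $ i' * (X $ i' / r $ i')" using sum.delta'[of UNIV i' "\<lambda>i. r $ i * (X $ i / r $ i)"] by simp
      also have "\<dots> = X $ i'" using rnz[of i'] by simp
      finally show ?thesis .
    qed
    then show ?thesis by (simp add: vec_eq_iff)
  qed
  define T1 where "T1 = tangent_space PD r"
  define T2 where "T2 = tangent_space PD q"
  have T1e: "T1 = {v. (\<Sum>i\<in>UNIV. v $ i) = 0}" unfolding T1_def using ts_PD[OF rPD] .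
  have T2e: "T2 = {v. (\<Sum>i\<in>UNIV. v $ i) = 0}" unfolding T2_def using ts_PD[OF qPD] .
  have sub0: "subspace {v::real^'a. (\<Sum>i\<in>UNIV. v $ i) = 0}"
    by (auto simp: subspace_def sum.distrib sum_distrib_left[symmetric])
  have T1: "subspace T1" using sub0 T1e by simp
  have T2: "subspace T2" using sub0 T2e by simp
  have AT: "\<forall>Y\<in>T2. V *v Y \<in> T1" unfolding T1e T2e using colsum[OF Vcs] by simp
  have BT: "\<forall>X\<in>T1. Bm *v X \<in> T2" unfolding T1e T2e using colsum[OF Bcs] by simp
  have AB: "\<forall>X\<in>T1. V *v (Bm *v X) = X" using VB by simp
  have mA: "\<forall>Y\<in>T2. fisher r (V *v Y) (V *v Y) \<le> fisher q Y Y"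
    using fisher_mono[of V q] Vnn Vcs qp unfolding r_def by blast
  have mB: "\<forall>X\<in>T1. fisher q (Bm *v X) (Bm *v X) \<le> fisher r X X"
    using fisher_mono[of Bm r] Bnn Bcs rp Br by metis
  have a: "linT T1 \<alpha>" and b: "linT T1 \<beta>" using a0 b0 unfolding T1_def cotangent_eq r_def markov_map_def by auto
  have "fisher r (sharp' T1 r \<alpha>) (sharp' T1 r \<beta>) =
         fisher q (sharp' T2 q (\<lambda>Y. \<alpha> (V *v Y))) (sharp' T2 q (\<lambda>Y. \<beta> (V *v Y)))"
    by (rule transfer[OF T1 T2 rp qp AT BT AB mA mB a b])
  then show ?thesis unfolding cometric_def sharp_eq pullback_def T1_def T2_def r_def markov_map_def .
qed


theorem mainTheorem7:
  shows "(\<forall>(M :: (real^'n) set) (N :: (real^'m) set) (W :: real^'n^'m) (V :: real^'m^'n) p q.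
            submanifold M \<and> submanifold N \<and> surj_channel W \<and> surj_channel V \<and>
            markov_map W ` M \<subseteq> N \<and> markov_map V ` N \<subseteq> M \<and>
            (\<forall>x\<in>M. markov_map V (markov_map W x) = x) \<and>
            p \<in> M \<and> q \<in> N \<and> q = markov_map W p \<and> p = markov_map V q \<longrightarrow>
            (\<forall>\<alpha>\<in>cotangent_space M p. \<forall>\<beta>\<in>cotangent_space M p.
               cometric M p \<alpha> \<beta> = cometric N q (pullback V \<alpha>) (pullback V \<beta>)))
       \<and> (\<forall>(V :: real^'m^'n) (q :: real^'m) \<alpha> \<beta>.
            markov_co_embedding V \<and> q \<in> PD \<and>
            \<alpha> \<in> cotangent_space PD (markov_map V q) \<and> \<beta> \<in> cotangent_space PD (markov_map V q) \<longrightarrow>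
            cometric PD (markov_map V q) \<alpha> \<beta> = cometric PD q (pullback V \<alpha>) (pullback V \<beta>))"
proof (intro conjI)
  show "\<forall>(M :: (real^'n) set) (N :: (real^'m) set) (W :: real^'n^'m) (V :: real^'m^'n) p q.
            submanifold M \<and> submanifold N \<and> surj_channel W \<and> surj_channel V \<and>
            markov_map W ` M \<subseteq> N \<and> markov_map V ` N \<subseteq> M \<and>
            (\<forall>x\<in>M. markov_map V (markov_map W x) = x) \<and>
            p \<in> M \<and> q \<in> N \<and> q = markov_map W p \<and> p = markov_map V q \<longrightarrow>
            (\<forall>\<alpha>\<in>cotangent_space M p. \<forall>\<beta>\<in>cotangent_space M p.
               cometric M p \<alpha> \<beta> = cometric N q (pullback V \<alpha>) (pullback V \<beta>))"
    apply (intro allI impI ballI)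
    apply (elim conjE)
    by (rule partA; assumption)
  show "\<forall>(V :: real^'m^'n) (q :: real^'m) \<alpha> \<beta>.
            markov_co_embedding V \<and> q \<in> PD \<and>
            \<alpha> \<in> cotangent_space PD (markov_map V q) \<and> \<beta> \<in> cotangent_space PD (markov_map V q) \<longrightarrow>
            cometric PD (markov_map V q) \<alpha> \<beta> = cometric PD q (pullback V \<alpha>) (pullback V \<beta>)"
    apply (intro allI impI)
    apply (elim conjE)
    by (rule partB; assumption)
qed

end
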